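(* Let $\mathcal{C}'$ be any function mapping a pair consisting of an $\mathcal{ALC}$-formula and an interpretation to an $\mathcal{ALC}$-formula. Then $\mathcal{C}'(\varphi,M)\equiv \mathcal{C}(\varphi,M)$ for every $\mathcal{ALC}$-formula $\varphi$ and every interpretation $M$ (where $\mathcal{C}$ is the finite base model contraction function defined in the context) if and only if $\mathcal{C}'$ satisfies, for every $\mathcal{ALC}$-formula $\varphi$ and every interpretation $M$, the following postulates: (success) $M\not\models \mathcal{C}'(\varphi,M)$; (inclusion) $\mathrm{Mod}(\mathcal{C}'(\varphi,M))\subseteq \mathrm{Mod}(\varphi)$; (atomic retainment) for every set $\mathbb{M}'$ of interpretations, if $\mathrm{Mod}(\mathcal{C}'(\varphi,M))\subsetneq \mathbb{M}'\subseteq \mathrm{Mod}(\varphi)\setminus [M]_\varphi$, then $\mathbb{M}'$ is not finitely representable in $\mathcal{ALC}$-formula; (atomic extensionality) for every interpretation $M'$, if $M'\equiv_\varphi M$ then $\mathrm{Mod}(\mathcal{C}'(\varphi,M))=\mathrm{Mod}(\mathcal{C}'(\varphi,M'))$.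
   Context: Syntax: $N_C,N_R,N_I$ are pairwise disjoint countably infinite sets of concept, role and individual names. $\mathcal{ALC}$ concepts: $C::=A\mid \neg C\mid (C\sqcap C)\mid \exists r.C$ ($A\in N_C$, $r\in N_R$); $\top$, $\sqcup$ are the usual abbreviations. $\mathcal{ALC}$-formulae: $\phi::=\alpha\mid\neg\phi\mid(\phi\wedge\phi)$, with atomic formulae $\alpha::=C(a)\mid r(a,b)\mid (C=\top)$, $a,b\in N_I$; $\vee$ and $\bot$ are the usual abbreviations and $\neg\neg\psi$ is identified with $\psi$. A literal is an atomic formula or the negation of one. Semantics: an interpretation $I=(\Delta^I,\cdot^I)$ has a countable nonempty domain and maps concept names to subsets, role names to binary relations and individual names to elements; concepts are interpreted as usual ($\top^I=\Delta^I$, $(\neg C)^I=\Delta^I\setminus C^I$, $(C\sqcap D)^I=C^I\cap D^I$, $(\exists r.C)^I=\{d\mid \exists d'\in C^I,(d,d')\in r^I\}$); $I\models C(a)$ iff $a^I\in C^I$, $I\models r(a,b)$ iff $(a^I,b^I)\in r^I$, $I\models (C=\top)$ iff $C^I=\Delta^I$, with $\neg,\wedge$ classical. Models are interpretations; $\mathrm{Mod}(\varphi)$ is the set of interpretations satisfying $\varphi$; $\varphi\equiv\psi$ iff $\mathrm{Mod}(\varphi)=\mathrm{Mod}(\psi)$. A set of interpretations is finitely representable in $\mathcal{ALC}$-formula if it equals $\mathrm{Mod}$ of some finite set of $\mathcal{ALC}$-formulae (equivalently of a single $\mathcal{ALC}$-formula). Subformulae: $\mathrm{Sub}(\alpha)=\mathrm{Sub}(\neg\alpha)=\{\alpha,\neg\alpha\}$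 for atomic $\alpha$; $\mathrm{Sub}(\psi\wedge\psi')=\mathrm{Sub}(\neg(\psi\wedge\psi'))=\{\psi\wedge\psi',\neg(\psi\wedge\psi')\}\cup\mathrm{Sub}(\psi)\cup\mathrm{Sub}(\psi')$. $\mathrm{con}(\varphi)$ is the smallest set of concepts containing $C$ whenever $(C=\top)\in\mathrm{Sub}(\varphi)$ or $C(a)\in\mathrm{Sub}(\varphi)$, containing $C,D$ whenever it contains $C\sqcap D$, containing $C$ whenever it contains $\exists r.C$, and closed under single negation. $\mathrm{ind}(\varphi)$ is the set of individual names in $\varphi$. A concept type for $\varphi$ is $c\subseteq\mathrm{con}(\varphi)$ with: $D\in c$ iff $\neg D\notin c$ for all $D\in\mathrm{con}(\varphi)$, and $D\sqcap E\in c$ iff $\{D,E\}\subseteq c$ for all $D\sqcap E\in\mathrm{con}(\varphi)$. A formula type for $\varphi$ is $f\subseteq\mathrm{Sub}(\varphi)$ with: $\psi\in f$ iff $\neg\psi\notin f$ for all $\psi\in\mathrm{Sub}(\varphi)$, and $\psi\wedge\psi'\in f$ iff $\{\psi,\psi'\}\subseteq f$ for all $\psi\wedge\psi'\in\mathrm{Sub}(\varphi)$. A model candidate for $\varphi$ is $(T,o,f)$ with $T$ a set of concept types, $o:\mathrm{ind}(\varphi)\to T$, $f$ a formula type, such that $\varphi\in f$; $C(a)\in f$ implies $C\in o(a)$; $r(a,b)\in f$ implies $\{\neg C\mid\neg\exists r.C\in o(a)\}\subseteq o(b)$. It is a quasimodel for $\varphi$ if moreover: for every $c\in T$ and $\exists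 r.D\in c$ there is $c'\in T$ with $\{D\}\cup\{\neg E\mid \neg\exists r.E\in c\}\subseteq c'$; for every $c\in T$ and concept $C$, $\neg C\in c$ implies $(C=\top)\notin f$; for every concept $C$, $\neg(C=\top)\in f$ implies some $c\in T$ has $C\notin c$; $T\neq\emptyset$. $\mathrm{ftypes}(\varphi)=\{f\mid (T,o,f)$ a quasimodel for $\varphi\}$. For an interpretation $I$, $\mathrm{qm}(\varphi,I)=(T,o,f)$ where $T=\{c(x)\mid x\in\Delta^I\}$ with $c(x)=\{C\in\mathrm{con}(\varphi)\mid x\in C^I\}$, $o(a)=c(a^I)$, $f=\{\psi\in\mathrm{Sub}(\varphi)\mid I\models\psi\}$. $\mathrm{lit}(f)$ is the set of literals in $f$. $\mathrm{qfilter}(\varphi,M)=\mathrm{ftypes}(\varphi)\setminus\{f\}$ where $\mathrm{qm}(\varphi,M)=(T,o,f)$. The finite base model contraction function is $\mathcal{C}(\varphi,M)=\bigvee_{f\in\mathrm{qfilter}(\varphi,M)}\bigwedge\mathrm{lit}(f)$ if $M\models\varphi$ and $\mathrm{qfilter}(\varphi,M)\neq\emptyset$; $\bot$ if $M\models\varphi$ and $\mathrm{qfilter}(\varphi,M)=\emptyset$; $\varphi$ otherwise. $\mathcal{L}_{lit}(\varphi)$ is the set of Boolean combinations of the atomic formulae occurring in $\varphi$; $M\equiv_\varphi M'$ iff for all $\psi\in\mathcal{L}_{lit}(\varphi)$, $M\models\psi$ iff $M'\models\psi$; $[M]_\varphi=\{M'\mid M'\equiv_\varphi M\}$. *)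

theory Defs
  imports Main
begin

section \<open>Syntax of ALC (concept, role and individual names are natural numbers)\<close>

datatype concept =
    CName nat
  | CNot concept
  | CAnd concept concept
  | CEx nat concept

datatype atom =
    CAssert concept nat
  | RAssert nat nat nat        (* r(a,b) *)
  | TBox concept               (* C = top *)

datatype formula =
    Atom atom
  | FNot formula
  | FAnd formula formula

definition ctop :: concept where
  "ctop = CNot (CAnd (CName 0) (CNot (CName 0)))"

definition ftrue :: formula where
  "ftrue = Atom (TBox ctop)"

definition ffalse :: formula where
  "ffalse = FNot ftrue"

definition FOr :: "formula \<Rightarrow> formula \<Rightarrow> formula" where
  "FOr a b = FNot (FAnd (FNot a) (FNot b))"

text \<open>Identification of double negations: single negation and normalisation.\<close>

fun cneg :: "concept \<Rightarrow> concept" where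
  "cneg (CNot C) = C"
| "cneg C = CNot C"

fun cnorm :: "concept \<Rightarrow> concept" where
  "cnorm (CName A) = CName A"
| "cnorm (CNot C) = cneg (cnorm C)"
| "cnorm (CAnd C D) = CAnd (cnorm C) (cnorm D)"
| "cnorm (CEx r C) = CEx r (cnorm C)"

fun anorm :: "atom \<Rightarrow> atom" where
  "anorm (CAssert C a) = CAssert (cnorm C) a"
| "anorm (RAssert r a b) = RAssert r a b"
| "anorm (TBox C) = TBox (cnorm C)"

fun neg :: "formula \<Rightarrow> formula" where
  "neg (FNot \<psi>) = \<psi>"
| "neg \<psi> = FNot \<psi>"

fun norm :: "formula \<Rightarrow> formula" where
  "norm (Atom \<alpha>) = Atom (anorm \<alpha>)"
| "norm (FNot \<psi>) = neg (norm \<psi>)"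
| "norm (FAnd \<psi> \<chi>) = FAnd (norm \<psi>) (norm \<chi>)"

record interp =
  dom :: "nat set"
  cI  :: "nat \<Rightarrow> nat set"
  rI  :: "nat \<Rightarrow> (nat \<times> nat) set"
  iI  :: "nat \<Rightarrow> nat"

text \<open>An interpretation: nonempty (countable, as a subset of nat) domain.\<close>
definition wf_interp :: "interp \<Rightarrow> bool" where
  "wf_interp I \<longleftrightarrow> dom I \<noteq> {} \<and> (\<forall>A. cI I A \<subseteq> dom I)
     \<and> (\<forall>r. rI I r \<subseteq> dom I \<times> dom I) \<and> (\<forall>a. iI I a \<in> dom I)"

fun ext :: "interp \<Rightarrow> concept \<Rightarrow> nat set" where
  "ext I (CName A) = cI I A"
| "ext I (CNot C) = dom I - ext I C"
| "ext I (CAnd C D) = ext I C \<inter> ext I D"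
| "ext I (CEx r C) = {d \<in> dom I. \<exists>d' \<in> ext I C. (d, d') \<in> rI I r}"

fun asat :: "interp \<Rightarrow> atom \<Rightarrow> bool" where
  "asat I (CAssert C a) = (iI I a \<in> ext I C)"
| "asat I (RAssert r a b) = ((iI I a, iI I b) \<in> rI I r)"
| "asat I (TBox C) = (ext I C = dom I)"

fun sat :: "interp \<Rightarrow> formula \<Rightarrow> bool" where
  "sat I (Atom \<alpha>) = asat I \<alpha>"
| "sat I (FNot \<psi>) = (\<not> sat I \<psi>)"
| "sat I (FAnd \<psi> \<chi>) = (sat I \<psi> \<and> sat I \<chi>)"

definition Mod :: "formula \<Rightarrow> interp set" where
  "Mod \<phi> = {I. wf_interp I \<and> sat I \<phi>}"

definition fin_rep :: "interp set \<Rightarrow> bool" where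
  "fin_rep S \<longleftrightarrow> (\<exists>\<Phi>. finite \<Phi> \<and> S = {I. wf_interp I \<and> (\<forall>\<phi>\<in>\<Phi>. sat I \<phi>)})"

fun Sub' :: "formula \<Rightarrow> formula set" where
  "Sub' (Atom \<alpha>) = {Atom \<alpha>, FNot (Atom \<alpha>)}"
| "Sub' (FNot \<psi>) = Sub' \<psi>"
| "Sub' (FAnd \<psi> \<chi>) = {FAnd \<psi> \<chi>, FNot (FAnd \<psi> \<chi>)} \<union> Sub' \<psi> \<union> Sub' \<chi>"

definition Sub :: "formula \<Rightarrow> formula set" where
  "Sub \<phi> = Sub' (norm \<phi>)"

inductive_set con :: "formula \<Rightarrow> concept set" for \<phi> where
  con_tbox: "Atom (TBox C) \<in> Sub \<phi> \<Longrightarrow> C \<in> con \<phi>"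
| con_assert: "Atom (CAssert C a) \<in> Sub \<phi> \<Longrightarrow> C \<in> con \<phi>"
| con_and1: "CAnd C D \<in> con \<phi> \<Longrightarrow> C \<in> con \<phi>"
| con_and2: "CAnd C D \<in> con \<phi> \<Longrightarrow> D \<in> con \<phi>"
| con_ex: "CEx r C \<in> con \<phi> \<Longrightarrow> C \<in> con \<phi>"
| con_neg: "C \<in> con \<phi> \<Longrightarrow> cneg C \<in> con \<phi>"

fun aind :: "atom \<Rightarrow> nat set" where
  "aind (CAssert C a) = {a}"
| "aind (RAssert r a b) = {a, b}"
| "aind (TBox C) = {}"

fun ind :: "formula \<Rightarrow> nat set" where
  "ind (Atom \<alpha>) = aind \<alpha>"
| "ind (FNot \<psi>) = ind \<psi>"
| "ind (FAnd \<psi> \<chi>) = ind \<psi> \<union> ind \<chi>"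

definition concept_type :: "formula \<Rightarrow> concept set \<Rightarrow> bool" where
  "concept_type \<phi> c \<longleftrightarrow> c \<subseteq> con \<phi>
     \<and> (\<forall>D \<in> con \<phi>. D \<in> c \<longleftrightarrow> cneg D \<notin> c)
     \<and> (\<forall>D E. CAnd D E \<in> con \<phi> \<longrightarrow> (CAnd D E \<in> c \<longleftrightarrow> D \<in> c \<and> E \<in> c))"

definition formula_type :: "formula \<Rightarrow> formula set \<Rightarrow> bool" where
  "formula_type \<phi> f \<longleftrightarrow> f \<subseteq> Sub \<phi>
     \<and> (\<forall>\<psi> \<in> Sub \<phi>. \<psi> \<in> f \<longleftrightarrow> neg \<psi> \<notin> f)
     \<and> (\<forall>\<psi> \<chi>. FAnd \<psi> \<chi> \<in> Sub \<phi> \<longrightarrow> (FAnd \<psi> \<chi> \<in> f \<longleftrightarrow> \<psi> \<in> f \<and> \<chi> \<in> f))"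

definition model_candidate ::
    "formula \<Rightarrow> concept set set \<Rightarrow> (nat \<Rightarrow> concept set) \<Rightarrow> formula set \<Rightarrow> bool" where
  "model_candidate \<phi> T oo f \<longleftrightarrow>
     (\<forall>c \<in> T. concept_type \<phi> c) \<and> (\<forall>a \<in> ind \<phi>. oo a \<in> T) \<and> formula_type \<phi> f
     \<and> norm \<phi> \<in> f
     \<and> (\<forall>C a. Atom (CAssert C a) \<in> f \<longrightarrow> C \<in> oo a)
     \<and> (\<forall>r a b. Atom (RAssert r a b) \<in> f \<longrightarrow>
          {cneg C | C. CNot (CEx r C) \<in> oo a} \<subseteq> oo b)"

definition quasimodel ::
    "formula \<Rightarrow> concept set set \<Rightarrow> (nat \<Rightarrow> concept set) \<Rightarrow> formula set \<Rightarrow> bool" where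
  "quasimodel \<phi> T oo f \<longleftrightarrow> model_candidate \<phi> T oo f
     \<and> (\<forall>c \<in> T. \<forall>r D. CEx r D \<in> c \<longrightarrow>
          (\<exists>c' \<in> T. {D} \<union> {cneg E | E. CNot (CEx r E) \<in> c} \<subseteq> c'))
     \<and> (\<forall>c \<in> T. \<forall>C. cneg C \<in> c \<longrightarrow> Atom (TBox C) \<notin> f)
     \<and> (\<forall>C. FNot (Atom (TBox C)) \<in> f \<longrightarrow> (\<exists>c \<in> T. C \<notin> c))
     \<and> T \<noteq> {}"

definition ftypes :: "formula \<Rightarrow> formula set set" where
  "ftypes \<phi> = {f. \<exists>T oo. quasimodel \<phi> T oo f}"

text \<open>The formula-type component of qm(phi, I) (the only component qfilter uses);
  the other components are given for completeness.\<close>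
definition qm_T :: "formula \<Rightarrow> interp \<Rightarrow> concept set set" where
  "qm_T \<phi> I = {{C \<in> con \<phi>. x \<in> ext I C} | x. x \<in> dom I}"

definition qm_o :: "formula \<Rightarrow> interp \<Rightarrow> nat \<Rightarrow> concept set" where
  "qm_o \<phi> I a = {C \<in> con \<phi>. iI I a \<in> ext I C}"

definition qm_f :: "formula \<Rightarrow> interp \<Rightarrow> formula set" where
  "qm_f \<phi> I = {\<psi> \<in> Sub \<phi>. sat I \<psi>}"

definition qfilter :: "formula \<Rightarrow> interp \<Rightarrow> formula set set" where
  "qfilter \<phi> M = ftypes \<phi> - {qm_f \<phi> M}"

fun is_lit :: "formula \<Rightarrow> bool" where
  "is_lit (Atom \<alpha>) = True"
| "is_lit (FNot (Atom \<alpha>)) = True"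
| "is_lit _ = False"

definition lit :: "formula set \<Rightarrow> formula set" where
  "lit f = {\<psi> \<in> f. is_lit \<psi>}"

definition list_of :: "'a set \<Rightarrow> 'a list" where
  "list_of S = (SOME xs. set xs = S)"

definition BigAnd :: "formula set \<Rightarrow> formula" where
  "BigAnd S = foldr FAnd (list_of S) ftrue"

definition BigOr :: "formula set \<Rightarrow> formula" where
  "BigOr S = foldr FOr (list_of S) ffalse"

definition contr :: "formula \<Rightarrow> interp \<Rightarrow> formula" where
  "contr \<phi> M =
     (if sat M \<phi> then
        (if qfilter \<phi> M \<noteq> {} then BigOr ((\<lambda>f. BigAnd (lit f)) ` qfilter \<phi> M) else ffalse)
      else \<phi>)"

fun atoms :: "formula \<Rightarrow> atom set" where
  "atoms (Atom \<alpha>) = {\<alpha>}"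
| "atoms (FNot \<psi>) = atoms \<psi>"
| "atoms (FAnd \<psi> \<chi>) = atoms \<psi> \<union> atoms \<chi>"

inductive_set Llit :: "formula \<Rightarrow> formula set" for \<phi> where
  Llit_atom: "\<alpha> \<in> atoms \<phi> \<Longrightarrow> Atom \<alpha> \<in> Llit \<phi>"
| Llit_not: "\<psi> \<in> Llit \<phi> \<Longrightarrow> FNot \<psi> \<in> Llit \<phi>"
| Llit_and: "\<psi> \<in> Llit \<phi> \<Longrightarrow> \<chi> \<in> Llit \<phi> \<Longrightarrow> FAnd \<psi> \<chi> \<in> Llit \<phi>"

definition atom_equiv :: "formula \<Rightarrow> interp \<Rightarrow> interp \<Rightarrow> bool" where
  "atom_equiv \<phi> M M' \<longleftrightarrow> (\<forall>\<psi> \<in> Llit \<phi>. sat M \<psi> \<longleftrightarrow> sat M' \<psi>)"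

definition atom_class :: "formula \<Rightarrow> interp \<Rightarrow> interp set" where
  "atom_class \<phi> M = {M'. wf_interp M' \<and> atom_equiv \<phi> M' M}"

end

theory Submission
  imports Defs
begin

lemma ext_sub: "wf_interp I \<Longrightarrow> ext I C \<subseteq> dom I"
  by (induction C) (auto simp: wf_interp_def)

lemma ext_cneg: "wf_interp I \<Longrightarrow> ext I (cneg C) = dom I - ext I C"
  by (cases C) (use ext_sub in auto)

lemma ext_cnorm: "wf_interp I \<Longrightarrow> ext I (cnorm C) = ext I C"
  by (induction C) (auto simp: ext_cneg)

lemma asat_anorm: "wf_interp I \<Longrightarrow> asat I (anorm a) = asat I a"
  by (cases a) (auto simp: ext_cnorm)

lemma sat_neg: "sat I (neg \<psi>) = (\<not> sat I \<psi>)"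
  by (cases \<psi> rule: neg.cases) auto

lemma sat_norm: "wf_interp I \<Longrightarrow> sat I (norm \<psi>) = sat I \<psi>"
  by (induction \<psi>) (auto simp: sat_neg asat_anorm)

fun nrm :: "formula \<Rightarrow> bool" where
  "nrm (Atom _) = True"
| "nrm (FNot (FNot _)) = False"
| "nrm (FNot \<psi>) = nrm \<psi>"
| "nrm (FAnd a b) = (nrm a \<and> nrm b)"

lemma nrm_neg: "nrm \<psi> \<Longrightarrow> nrm (neg \<psi>)"
  by (cases \<psi> rule: neg.cases) (auto elim: nrm.elims)

lemma nrm_norm: "nrm (norm \<psi>)"
  by (induction \<psi>) (auto simp: nrm_neg)

lemma self_Sub': "nrm x \<Longrightarrow> x \<in> Sub' x"
  by (induction x rule: nrm.induct) auto

lemma Sub'_FNot: "FNot \<psi> \<in> Sub' x \<Longrightarrow> \<psi> \<in> Sub' x"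
  by (induction x) auto

lemma Sub'_nrm: "\<psi> \<in> Sub' x \<Longrightarrow> nrm x \<Longrightarrow> nrm \<psi>"
  by (induction x rule: nrm.induct) auto

lemma Sub'_FAnd: "FAnd a b \<in> Sub' x \<Longrightarrow> nrm x \<Longrightarrow> a \<in> Sub' x \<and> b \<in> Sub' x"
proof (induction x rule: nrm.induct)
  case (4 a' b')
  then show ?case using self_Sub' by auto
qed auto

lemma Sub'_neg: "\<psi> \<in> Sub' x \<Longrightarrow> neg \<psi> \<in> Sub' x"
  by (induction x) auto

lemma Sub'_fin: "finite (Sub' x)"
  by (induction x) auto

lemma Sub'_atoms: "\<psi> \<in> Sub' x \<Longrightarrow> atoms \<psi> \<subseteq> atoms x"
  by (induction x) auto

lemma atoms_neg: "atoms (neg \<psi>) = atoms \<psi>"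
  by (cases \<psi> rule: neg.cases) auto

lemma atoms_norm: "atoms (norm x) = anorm ` atoms x"
  by (induction x) (auto simp: atoms_neg)

lemma Sub'_negeq: "Sub' (neg \<psi>) = Sub' \<psi>"
  by (cases \<psi> rule: neg.cases) auto

lemma atom_in_Sub: "\<alpha> \<in> atoms x \<Longrightarrow> Atom (anorm \<alpha>) \<in> Sub' (norm x)"
  by (induction x) (auto simp: Sub'_negeq)

lemma sat_agree: "(\<forall>\<alpha> \<in> atoms \<psi>. asat M \<alpha> = asat M' \<alpha>) \<Longrightarrow> sat M \<psi> = sat M' \<psi>"
  by (induction \<psi>) auto

lemma Llit_atoms: "\<psi> \<in> Llit \<phi> \<Longrightarrow> atoms \<psi> \<subseteq> atoms \<phi>"
  by (induction rule: Llit.induct) auto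

lemma atoms_Llit: "atoms \<psi> \<subseteq> atoms \<phi> \<Longrightarrow> \<psi> \<in> Llit \<phi>"
  by (induction \<psi>) (auto intro: Llit.intros)

lemma equiv_qm:
  assumes "wf_interp M" "wf_interp M'" "atom_equiv \<phi> M' M"
  shows "sat M' \<phi> = sat M \<phi>" "qm_f \<phi> M' = qm_f \<phi> M"
proof -
  show "sat M' \<phi> = sat M \<phi>" using assms(3) atoms_Llit[of \<phi> \<phi>] by (auto simp: atom_equiv_def)
  have A: "asat M' \<alpha> = asat M \<alpha>" if "\<alpha> \<in> atoms \<phi>" for \<alpha>
    using assms(3) atoms_Llit[of "Atom \<alpha>" \<phi>] that by (auto simp: atom_equiv_def)
  have "sat M' \<psi> = sat M \<psi>" if "\<psi> \<in> Sub \<phi>" for \<psi>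
  proof (rule sat_agree, rule ballI)
    fix \<beta> assume "\<beta> \<in> atoms \<psi>"
    then have "\<beta> \<in> atoms (norm \<phi>)" using Sub'_atoms that by (auto simp: Sub_def)
    then obtain \<alpha> where "\<alpha> \<in> atoms \<phi>" "\<beta> = anorm \<alpha>" by (auto simp: atoms_norm)
    then show "asat M' \<beta> = asat M \<beta>" using A asat_anorm assms(1,2) by auto
  qed
  then show "qm_f \<phi> M' = qm_f \<phi> M" by (auto simp: qm_f_def)
qed

lemma qm_equiv:
  assumes "wf_interp M" "wf_interp M'" "qm_f \<phi> M' = qm_f \<phi> M"
  shows "atom_equiv \<phi> M' M"
proof -
  have A: "asat M' \<alpha> = asat M \<alpha>" if "\<alpha> \<in> atoms \<phi>" for \<alpha>
  proof -
    have "Atom (anorm \<alpha>) \<in> Sub \<phi>" using atom_in_Sub that by (auto simp: Sub_def)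
    then have "sat M' (Atom (anorm \<alpha>)) = sat M (Atom (anorm \<alpha>))"
      using assms(3) unfolding qm_f_def by blast
    then show ?thesis using asat_anorm assms(1,2) by auto
  qed
  show ?thesis unfolding atom_equiv_def
    using A Llit_atoms sat_agree by blast
qed

lemma ft_neg: "formula_type \<phi> f \<Longrightarrow> \<psi> \<in> Sub \<phi> \<Longrightarrow> (\<psi> \<in> f) = (neg \<psi> \<notin> f)"
  unfolding formula_type_def by blast

lemma ft_and: "formula_type \<phi> f \<Longrightarrow> FAnd a b \<in> Sub \<phi> \<Longrightarrow> (FAnd a b \<in> f) = (a \<in> f \<and> b \<in> f)"
  unfolding formula_type_def by blast

lemma ftype_lits:
  assumes ft: "formula_type \<phi> f" and lits: "\<forall>\<psi> \<in> lit f. sat I \<psi>"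
  shows "f = qm_f \<phi> I"
proof -
  have N: "nrm (norm \<phi>)" by (rule nrm_norm)
  have "\<psi> \<in> Sub \<phi> \<longrightarrow> (\<psi> \<in> f \<longleftrightarrow> sat I \<psi>)" for \<psi>
  proof (induction \<psi>)
    case (Atom \<alpha>)
    show ?case
    proof
      assume S: "Atom \<alpha> \<in> Sub \<phi>"
      then have E: "Atom \<alpha> \<in> f \<longleftrightarrow> FNot (Atom \<alpha>) \<notin> f" using ft_neg[OF ft S] by simp
      have "Atom \<alpha> \<in> f \<Longrightarrow> sat I (Atom \<alpha>)"
      proof -
        assume "Atom \<alpha> \<in> f"
        then have "Atom \<alpha> \<in> lit f" unfolding lit_def by simp
        then show ?thesis using lits by blast
      qed
      moreover have "FNot (Atom \<alpha>) \<in> f \<Longrightarrow> \<not> sat I (Atom \<alpha>)"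
      proof -
        assume "FNot (Atom \<alpha>) \<in> f"
        then have "FNot (Atom \<alpha>) \<in> lit f" unfolding lit_def by simp
        then have "sat I (FNot (Atom \<alpha>))" using lits by blast
        then show ?thesis by simp
      qed
      ultimately show "Atom \<alpha> \<in> f \<longleftrightarrow> sat I (Atom \<alpha>)" using E by blast
    qed
  next
    case (FNot \<psi>)
    show ?case
    proof
      assume S: "FNot \<psi> \<in> Sub \<phi>"
      then have "\<psi> \<in> Sub \<phi>" using Sub'_FNot by (auto simp: Sub_def)
      moreover have "FNot \<psi> \<in> f \<longleftrightarrow> \<psi> \<notin> f" using ft_neg[OF ft S] by simp
      ultimately show "FNot \<psi> \<in> f \<longleftrightarrow> sat I (FNot \<psi>)" using FNot by simp
    qed
  next
    case (FAnd a b)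
    show ?case
    proof
      assume S: "FAnd a b \<in> Sub \<phi>"
      then have "a \<in> Sub \<phi> \<and> b \<in> Sub \<phi>" using Sub'_FAnd[OF _ N] unfolding Sub_def by blast
      then have "a \<in> Sub \<phi>" "b \<in> Sub \<phi>" by auto
      moreover have "FAnd a b \<in> f \<longleftrightarrow> a \<in> f \<and> b \<in> f" using ft_and[OF ft S] .
      ultimately show "FAnd a b \<in> f \<longleftrightarrow> sat I (FAnd a b)" using FAnd.IH by simp
    qed
  qed
  moreover have "f \<subseteq> Sub \<phi>" using ft by (simp add: formula_type_def)
  ultimately show ?thesis unfolding qm_f_def by blast
qed

lemma con_cnegE: "CNot (CEx r C) \<in> con \<phi> \<Longrightarrow> cneg C \<in> con \<phi>"
proof -
  assume "CNot (CEx r C) \<in> con \<phi>"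
  then have "cneg (CNot (CEx r C)) \<in> con \<phi>" by (rule con_neg)
  then have "C \<in> con \<phi>" by (auto intro: con_ex)
  then show ?thesis by (rule con_neg)
qed

lemma qm_ftypes:
  assumes wf: "wf_interp I" and s: "sat I \<phi>"
  shows "qm_f \<phi> I \<in> ftypes \<phi>"
proof -
  have N: "nrm (norm \<phi>)" by (rule nrm_norm)
  let ?t = "\<lambda>x. {C \<in> con \<phi>. x \<in> ext I C}"
  have D: "ext I C \<subseteq> dom I" for C using ext_sub wf by auto
  have CN: "ext I (cneg C) = dom I - ext I C" for C using ext_cneg wf by auto
  have ct: "concept_type \<phi> (?t x)" if "x \<in> dom I" for x
    unfolding concept_type_def
  proof (intro conjI ballI allI impI)
    show "?t x \<subseteq> con \<phi>" by blast
    fix D assume "D \<in> con \<phi>"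
    then have "cneg D \<in> con \<phi>" by (rule con_neg)
    then show "(D \<in> ?t x) = (cneg D \<notin> ?t x)" using \<open>D \<in> con \<phi>\<close> CN[of D] that by blast
  next
    fix D E assume "CAnd D E \<in> con \<phi>"
    then have "D \<in> con \<phi>" "E \<in> con \<phi>" by (auto intro: con_and1 con_and2)
    then show "(CAnd D E \<in> ?t x) = (D \<in> ?t x \<and> E \<in> ?t x)" using \<open>CAnd D E \<in> con \<phi>\<close> by simp
  qed
  have ft: "formula_type \<phi> (qm_f \<phi> I)"
    unfolding formula_type_def
  proof (intro conjI ballI allI impI)
    show "qm_f \<phi> I \<subseteq> Sub \<phi>" by (auto simp: qm_f_def)
    fix \<psi> assume "\<psi> \<in> Sub \<phi>"
    then have "neg \<psi> \<in> Sub \<phi>" using Sub'_neg unfolding Sub_def by blast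
    then show "(\<psi> \<in> qm_f \<phi> I) = (neg \<psi> \<notin> qm_f \<phi> I)"
      using \<open>\<psi> \<in> Sub \<phi>\<close> sat_neg[of I \<psi>] unfolding qm_f_def by blast
  next
    fix a b assume S: "FAnd a b \<in> Sub \<phi>"
    then have "a \<in> Sub \<phi> \<and> b \<in> Sub \<phi>" using Sub'_FAnd[OF _ N] unfolding Sub_def by blast
    then show "(FAnd a b \<in> qm_f \<phi> I) = (a \<in> qm_f \<phi> I \<and> b \<in> qm_f \<phi> I)"
      using S unfolding qm_f_def by auto
  qed
  have univ: "{cneg E | E. CNot (CEx r E) \<in> ?t x} \<subseteq> ?t y"
    if "x \<in> dom I" "(x, y) \<in> rI I r" for x y r
  proof
    fix F assume "F \<in> {cneg E | E. CNot (CEx r E) \<in> ?t x}"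
    then obtain E where E: "F = cneg E" "CNot (CEx r E) \<in> con \<phi>" "x \<in> ext I (CNot (CEx r E))" by auto
    have "y \<in> dom I" using that wf by (auto simp: wf_interp_def)
    moreover have "y \<notin> ext I E" using E(3) that by auto
    ultimately show "F \<in> ?t y" using E con_cnegE CN by auto
  qed
  have mc: "model_candidate \<phi> (qm_T \<phi> I) (qm_o \<phi> I) (qm_f \<phi> I)"
    unfolding model_candidate_def
  proof (intro conjI)
    show "\<forall>c\<in>qm_T \<phi> I. concept_type \<phi> c" using ct by (auto simp: qm_T_def)
    show "\<forall>a\<in>ind \<phi>. qm_o \<phi> I a \<in> qm_T \<phi> I" using wf by (auto simp: qm_T_def qm_o_def wf_interp_def)
    show "formula_type \<phi> (qm_f \<phi> I)" by (rule ft)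
    show "norm \<phi> \<in> qm_f \<phi> I" using self_Sub'[OF N] sat_norm[OF wf] s by (auto simp: qm_f_def Sub_def)
    show "\<forall>C a. Atom (CAssert C a) \<in> qm_f \<phi> I \<longrightarrow> C \<in> qm_o \<phi> I a"
      by (auto simp: qm_f_def qm_o_def intro: con_assert)
    show "\<forall>r a b. Atom (RAssert r a b) \<in> qm_f \<phi> I \<longrightarrow> {cneg C |C. CNot (CEx r C) \<in> qm_o \<phi> I a} \<subseteq> qm_o \<phi> I b"
    proof (intro allI impI)
      fix r a b assume "Atom (RAssert r a b) \<in> qm_f \<phi> I"
      then have P: "(iI I a, iI I b) \<in> rI I r" by (simp add: qm_f_def)
      have "iI I a \<in> dom I" using wf by (simp add: wf_interp_def)
      from this P have "{cneg E | E. CNot (CEx r E) \<in> ?t (iI I a)} \<subseteq> ?t (iI I b)" by (rule univ)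
      then show "{cneg C |C. CNot (CEx r C) \<in> qm_o \<phi> I a} \<subseteq> qm_o \<phi> I b"
        unfolding qm_o_def .
    qed
  qed
  have "quasimodel \<phi> (qm_T \<phi> I) (qm_o \<phi> I) (qm_f \<phi> I)"
    unfolding quasimodel_def
  proof (intro conjI mc)
    show "\<forall>c\<in>qm_T \<phi> I. \<forall>r D. CEx r D \<in> c \<longrightarrow> (\<exists>c'\<in>qm_T \<phi> I. {D} \<union> {cneg E |E. CNot (CEx r E) \<in> c} \<subseteq> c')"
    proof (intro ballI allI impI)
      fix c r D assume c: "c \<in> qm_T \<phi> I" and ex: "CEx r D \<in> c"
      then obtain x where x: "x \<in> dom I" "c = ?t x" unfolding qm_T_def by blast
      then have "CEx r D \<in> {C \<in> con \<phi>. x \<in> ext I C}" using ex by simp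
      then have "x \<in> ext I (CEx r D)" "CEx r D \<in> con \<phi>" by simp_all
      then obtain y where y: "y \<in> ext I D" "(x, y) \<in> rI I r" by auto
      have "y \<in> dom I" using y(1) D[of D] by blast
      then have T: "?t y \<in> qm_T \<phi> I" unfolding qm_T_def by blast
      have "D \<in> con \<phi>" using \<open>CEx r D \<in> con \<phi>\<close> by (rule con_ex)
      then have "D \<in> ?t y" using y by simp
      show "\<exists>c'\<in>qm_T \<phi> I. {D} \<union> {cneg E |E. CNot (CEx r E) \<in> c} \<subseteq> c'"
      proof (rule bexI[OF _ T])
        show "{D} \<union> {cneg E |E. CNot (CEx r E) \<in> c} \<subseteq> ?t y"
          unfolding x(2) using univ[OF x(1) y(2)] \<open>D \<in> ?t y\<close> by (simp only: Un_subset_iff insert_subset empty_subsetI)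
      qed
    qed
    show "\<forall>c\<in>qm_T \<phi> I. \<forall>C. cneg C \<in> c \<longrightarrow> Atom (TBox C) \<notin> qm_f \<phi> I"
      using CN by (auto simp: qm_T_def qm_f_def)
    show "\<forall>C. FNot (Atom (TBox C)) \<in> qm_f \<phi> I \<longrightarrow> (\<exists>c\<in>qm_T \<phi> I. C \<notin> c)"
    proof (intro allI impI)
      fix C assume "FNot (Atom (TBox C)) \<in> qm_f \<phi> I"
      then have "ext I C \<noteq> dom I" by (auto simp: qm_f_def)
      then obtain x where "x \<in> dom I" "x \<notin> ext I C" using D by blast
      then show "\<exists>c\<in>qm_T \<phi> I. C \<notin> c" by (auto simp: qm_T_def)
    qed
    show "qm_T \<phi> I \<noteq> {}" using wf by (auto simp: qm_T_def wf_interp_def)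
  qed
  then show ?thesis by (auto simp: ftypes_def)
qed

lemma list_of_set: "finite S \<Longrightarrow> set (list_of S) = S"
  unfolding list_of_def by (rule someI_ex) (rule finite_list)

lemma sat_ftrue: "sat I ftrue"
  by (auto simp: ftrue_def ctop_def)

lemma sat_BigAnd: "finite S \<Longrightarrow> sat I (BigAnd S) = (\<forall>\<psi>\<in>S. sat I \<psi>)"
proof -
  have "sat I (foldr FAnd xs ftrue) = (\<forall>\<psi>\<in>set xs. sat I \<psi>)" for xs
    by (induction xs) (auto simp: sat_ftrue)
  then show "finite S \<Longrightarrow> ?thesis" by (simp add: BigAnd_def list_of_set)
qed

lemma sat_BigOr: "finite S \<Longrightarrow> sat I (BigOr S) = (\<exists>\<psi>\<in>S. sat I \<psi>)"
proof -
  have "sat I (foldr FOr xs ffalse) = (\<exists>\<psi>\<in>set xs. sat I \<psi>)" for xs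
    by (induction xs) (auto simp: sat_ftrue ffalse_def FOr_def)
  then show "finite S \<Longrightarrow> ?thesis" by (simp add: BigOr_def list_of_set)
qed

lemma finite_Sub: "finite (Sub \<phi>)"
  by (simp add: Sub_def Sub'_fin)

lemma ftypes_ft: "f \<in> ftypes \<phi> \<Longrightarrow> formula_type \<phi> f \<and> norm \<phi> \<in> f"
  unfolding ftypes_def quasimodel_def model_candidate_def by blast

lemma finite_lit: "formula_type \<phi> f \<Longrightarrow> finite (lit f)"
proof -
  assume "formula_type \<phi> f"
  then have "lit f \<subseteq> Sub \<phi>" unfolding formula_type_def lit_def by blast
  then show ?thesis using finite_Sub finite_subset by blast
qed

lemma finite_qfilter: "finite (qfilter \<phi> M)"
proof -
  have "qfilter \<phi> M \<subseteq> Pow (Sub \<phi>)"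
    unfolding qfilter_def using ftypes_ft unfolding formula_type_def by blast
  then show ?thesis using finite_Sub finite_subset by blast
qed

lemma sat_lits_qm: "\<forall>\<psi> \<in> lit (qm_f \<phi> I). sat I \<psi>"
  unfolding lit_def qm_f_def by blast

lemma contr_Mod:
  assumes wf: "wf_interp M"
  shows "Mod (contr \<phi> M) = Mod \<phi> - atom_class \<phi> M"
proof (cases "sat M \<phi>")
  case False
  have "Mod \<phi> \<inter> atom_class \<phi> M = {}"
    using equiv_qm(1)[OF wf] False unfolding Mod_def atom_class_def by blast
  then show ?thesis using False by (auto simp: contr_def)
next
  case True
  have key: "I \<in> Mod (contr \<phi> M) \<longleftrightarrow> (\<exists>f \<in> qfilter \<phi> M. \<forall>\<psi> \<in> lit f. sat I \<psi>)"
    if wI: "wf_interp I" for I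
  proof (cases "qfilter \<phi> M = {}")
    case True
    then show ?thesis using \<open>sat M \<phi>\<close> by (simp add: contr_def Mod_def ffalse_def sat_ftrue)
  next
    case False
    have fin: "finite ((\<lambda>f. BigAnd (lit f)) ` qfilter \<phi> M)" using finite_qfilter by blast
    have "sat I (BigAnd (lit f)) = (\<forall>\<psi> \<in> lit f. sat I \<psi>)" if "f \<in> qfilter \<phi> M" for f
      using that finite_lit ftypes_ft sat_BigAnd unfolding qfilter_def by blast
    then show ?thesis using \<open>sat M \<phi>\<close> False wI sat_BigOr[OF fin]
      by (simp add: contr_def Mod_def)
  qed
  show ?thesis
  proof (intro equalityI subsetI)
    fix I assume I: "I \<in> Mod (contr \<phi> M)"
    then have wI: "wf_interp I" by (simp add: Mod_def)
    then obtain f where f: "f \<in> qfilter \<phi> M" "\<forall>\<psi> \<in> lit f. sat I \<psi>" using key I by blast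
    then have ff: "formula_type \<phi> f" "norm \<phi> \<in> f" using ftypes_ft unfolding qfilter_def by auto
    then have fq: "f = qm_f \<phi> I" using ftype_lits f(2) by blast
    then have "sat I (norm \<phi>)" using ff(2) by (simp add: qm_f_def)
    then have "sat I \<phi>" using sat_norm wI by blast
    moreover have "I \<notin> atom_class \<phi> M"
    proof
      assume "I \<in> atom_class \<phi> M"
      then have "qm_f \<phi> I = qm_f \<phi> M" using equiv_qm(2)[OF wf wI] unfolding atom_class_def by blast
      then show False using f(1) fq unfolding qfilter_def by blast
    qed
    ultimately show "I \<in> Mod \<phi> - atom_class \<phi> M" using wI by (simp add: Mod_def)
  next
    fix I assume I: "I \<in> Mod \<phi> - atom_class \<phi> M"
    then have wI: "wf_interp I" and sI: "sat I \<phi>" by (auto simp: Mod_def)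
    have "qm_f \<phi> I \<in> ftypes \<phi>" using qm_ftypes[OF wI sI] .
    moreover have "qm_f \<phi> I \<noteq> qm_f \<phi> M"
    proof
      assume "qm_f \<phi> I = qm_f \<phi> M"
      then have "atom_equiv \<phi> I M" using qm_equiv[OF wf wI] by blast
      then show False using I wI unfolding atom_class_def by blast
    qed
    ultimately have "qm_f \<phi> I \<in> qfilter \<phi> M" unfolding qfilter_def by blast
    then show "I \<in> Mod (contr \<phi> M)" using key[OF wI] sat_lits_qm by blast
  qed
qed

lemma self_class: "wf_interp M \<Longrightarrow> M \<in> atom_class \<phi> M"
  by (simp add: atom_class_def atom_equiv_def)

lemma class_eq: "atom_equiv \<phi> M' M \<Longrightarrow> atom_class \<phi> M' = atom_class \<phi> M"
  unfolding atom_class_def atom_equiv_def by auto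

lemma fin_rep_Mod: "fin_rep (Mod \<psi>)"
  unfolding fin_rep_def Mod_def by (rule exI[of _ "{\<psi>}"]) auto

theorem mainTheorem1:
  fixes C' :: "formula \<Rightarrow> interp \<Rightarrow> formula"
  shows "(\<forall>\<phi> M. wf_interp M \<longrightarrow> Mod (C' \<phi> M) = Mod (contr \<phi> M)) \<longleftrightarrow>
         (\<forall>\<phi> M. wf_interp M \<longrightarrow>
            \<not> sat M (C' \<phi> M)
          \<and> Mod (C' \<phi> M) \<subseteq> Mod \<phi>
          \<and> (\<forall>MM. Mod (C' \<phi> M) \<subset> MM \<and> MM \<subseteq> Mod \<phi> - atom_class \<phi> M \<longrightarrow> \<not> fin_rep MM)
          \<and> (\<forall>M'. wf_interp M' \<and> atom_equiv \<phi> M' M \<longrightarrow> Mod (C' \<phi> M) = Mod (C' \<phi> M')))"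
proof
  assume H: "\<forall>\<phi> M. wf_interp M \<longrightarrow> Mod (C' \<phi> M) = Mod (contr \<phi> M)"
  show "\<forall>\<phi> M. wf_interp M \<longrightarrow>
            \<not> sat M (C' \<phi> M)
          \<and> Mod (C' \<phi> M) \<subseteq> Mod \<phi>
          \<and> (\<forall>MM. Mod (C' \<phi> M) \<subset> MM \<and> MM \<subseteq> Mod \<phi> - atom_class \<phi> M \<longrightarrow> \<not> fin_rep MM)
          \<and> (\<forall>M'. wf_interp M' \<and> atom_equiv \<phi> M' M \<longrightarrow> Mod (C' \<phi> M) = Mod (C' \<phi> M'))"
  proof (rule allI, rule allI, rule impI, intro conjI)
    fix \<phi> M assume wf: "wf_interp M"
    have E: "Mod (C' \<phi> M) = Mod \<phi> - atom_class \<phi> M" using H wf contr_Mod by blast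
    show "\<not> sat M (C' \<phi> M)"
    proof
      assume "sat M (C' \<phi> M)"
      then have "M \<in> Mod (C' \<phi> M)" using wf by (simp add: Mod_def)
      then show False using E self_class[OF wf] by blast
    qed
    show "Mod (C' \<phi> M) \<subseteq> Mod \<phi>" using E by blast
    show "\<forall>MM. Mod (C' \<phi> M) \<subset> MM \<and> MM \<subseteq> Mod \<phi> - atom_class \<phi> M \<longrightarrow> \<not> fin_rep MM"
      using E by blast
    show "\<forall>M'. wf_interp M' \<and> atom_equiv \<phi> M' M \<longrightarrow> Mod (C' \<phi> M) = Mod (C' \<phi> M')"
    proof (intro allI impI)
      fix M' assume M': "wf_interp M' \<and> atom_equiv \<phi> M' M"
      have "Mod (C' \<phi> M') = Mod \<phi> - atom_class \<phi> M'" using H M' contr_Mod by blast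
      moreover have "atom_class \<phi> M' = atom_class \<phi> M" using class_eq M' by blast
      ultimately show "Mod (C' \<phi> M) = Mod (C' \<phi> M')" using E by simp
    qed
  qed
next
  assume P: "\<forall>\<phi> M. wf_interp M \<longrightarrow>
            \<not> sat M (C' \<phi> M)
          \<and> Mod (C' \<phi> M) \<subseteq> Mod \<phi>
          \<and> (\<forall>MM. Mod (C' \<phi> M) \<subset> MM \<and> MM \<subseteq> Mod \<phi> - atom_class \<phi> M \<longrightarrow> \<not> fin_rep MM)
          \<and> (\<forall>M'. wf_interp M' \<and> atom_equiv \<phi> M' M \<longrightarrow> Mod (C' \<phi> M) = Mod (C' \<phi> M'))"
  show "\<forall>\<phi> M. wf_interp M \<longrightarrow> Mod (C' \<phi> M) = Mod (contr \<phi> M)"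
  proof (intro allI impI)
    fix \<phi> M assume wf: "wf_interp M"
    have E: "Mod (contr \<phi> M) = Mod \<phi> - atom_class \<phi> M" using wf contr_Mod by blast
    have inc: "Mod (C' \<phi> M) \<subseteq> Mod \<phi>" using P wf by blast
    have ret: "\<forall>MM. Mod (C' \<phi> M) \<subset> MM \<and> MM \<subseteq> Mod \<phi> - atom_class \<phi> M \<longrightarrow> \<not> fin_rep MM"
      using P wf by blast
    have sub: "Mod (C' \<phi> M) \<subseteq> Mod \<phi> - atom_class \<phi> M"
    proof
      fix I assume I: "I \<in> Mod (C' \<phi> M)"
      then have "I \<in> Mod \<phi>" using inc by blast
      moreover have "I \<notin> atom_class \<phi> M"
      proof
        assume "I \<in> atom_class \<phi> M"
        then have wI: "wf_interp I" and ae: "atom_equiv \<phi> I M" by (auto simp: atom_class_def)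
        then have "Mod (C' \<phi> M) = Mod (C' \<phi> I)" using P wf by blast
        moreover have "\<not> sat I (C' \<phi> I)" using P wI by blast
        ultimately show False using I by (simp add: Mod_def)
      qed
      ultimately show "I \<in> Mod \<phi> - atom_class \<phi> M" by blast
    qed
    have "Mod (C' \<phi> M) = Mod \<phi> - atom_class \<phi> M"
    proof (rule ccontr)
      assume "Mod (C' \<phi> M) \<noteq> Mod \<phi> - atom_class \<phi> M"
      then have "Mod (C' \<phi> M) \<subset> Mod \<phi> - atom_class \<phi> M" using sub by blast
      then have "\<not> fin_rep (Mod \<phi> - atom_class \<phi> M)" using ret by blast
      then show False using fin_rep_Mod[of "contr \<phi> M"] E by simp
    qed
    then show "Mod (C' \<phi> M) = Mod (contr \<phi> M)" using E by simp
  qed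
qed

end
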